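(* Let $G=(V,E)$ be a finite connected simple graph, let $m_0\colon V\to\mathbb{R}_{>0}$ be a vertex-weight and $d\colon E\to\mathbb{R}_{>0}$ a distance parameter, and set $M=\sum_{u\in V}m_0(u)$, $D^2=\sum_{uv\in E}d(uv)^2$. Let $m_1\colon E\to\mathbb{R}_{\ge 0}$ be an edge-weight such that the graph $(V,\{uv\in E: m_1(uv)>0\})$ is connected and $\sum_{uv\in E}m_1(uv)d(uv)^2=D^2$. Then $$\delta(G,m_0,d)\ \ge\ 1-\frac{D^2/M}{\lambda_1(G,(m_0,m_1))}.$$ Moreover, equality holds if and only if there exists a map $\varphi\colon V\to\mathbb{R}^{|V|}$ satisfying $\sum_{u\in V}m_0(u)\|\varphi(u)\|^2=M$ and $\|\varphi(u)-\varphi(v)\|\le d(uv)$ for all $uv\in E$, such that (i) $m_1(uv)\big(d(uv)^2-\|\varphi(u)-\varphi(v)\|^2\big)=0$ for all $uv\in E$, and (ii) $\Delta_{(m_0,m_1)}\varphi=\lambda_1(G,(m_0,m_1))\,(\varphi-\mathrm{bar}(\varphi))$, where $\Delta_{(m_0,m_1)}$ is applied componentwise (i.e. each component of $\varphi-\mathrm{bar}(\varphi)$ is an eigenvector of $\Delta_{(m_0,m_1)}$ for the eigenvalue $\lambda_1(G,(m_0,m_1))$).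
   Context: Edges are unordered pairs $uv=vu$; write $v\sim u$ if $uv\in E$. $\|\cdot\|$ is the Euclidean norm on $\mathbb{R}^{|V|}$. For $\varphi\colon V\to\mathbb{R}^{|V|}$, the affine barycenter is $\mathrm{bar}(\varphi)=\frac1M\sum_{u\in V}m_0(u)\varphi(u)$. Define $\delta(G,m_0,d)=\inf_\varphi\|\mathrm{bar}(\varphi)\|^2$, the infimum over all maps $\varphi\colon V\to\mathbb{R}^{|V|}$ with $\sum_{u\in V}m_0(u)\|\varphi(u)\|^2=M$ and $\|\varphi(u)-\varphi(v)\|\le d(uv)$ for all $uv\in E$. For an edge-weight $m_1\colon E\to\mathbb{R}_{\ge0}$, the Laplacian $\Delta_{(m_0,m_1)}$ acts on functions $f\colon V\to\mathbb{R}$ by $(\Delta_{(m_0,m_1)}f)(u)=\frac{1}{m_0(u)}\big[(\sum_{v\sim u}m_1(uv))f(u)-\sum_{v\sim u}m_1(uv)f(v)\big]$; it is symmetric and nonnegative for the inner product $\langle f_1,f_2\rangle=\sum_u m_0(u)f_1(u)f_2(u)$, and when $(V,\{uv: m_1(uv)>0\})$ is connected its kernel is the constants. $\lambda_1(G,(m_0,m_1))$ denotes its smallest positive eigenvalue, equivalently $\inf_f \frac{\sum_{uv\in E}m_1(uv)(f(u)-f(v))^2}{\sum_{u}m_0(u)(f(u)-\bar f)^2}$ over nonconstant $f$, with $\bar f=\frac1M\sum_u m_0(u)f(u)$. *)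

theory Defs
  imports "HOL-Analysis.Analysis"
begin

definition simple_graph :: "'a set \<Rightarrow> 'a set set \<Rightarrow> bool" where
  "simple_graph V E \<longleftrightarrow> finite V \<and> (\<forall>e\<in>E. \<exists>u v. u \<noteq> v \<and> u \<in> V \<and> v \<in> V \<and> e = {u, v})"

definition graph_connected :: "'a set \<Rightarrow> 'a set set \<Rightarrow> bool" where
  "graph_connected V E \<longleftrightarrow> V \<noteq> {} \<and>
     (\<forall>u\<in>V. \<forall>v\<in>V. (u, v) \<in> {(x, y). {x, y} \<in> E}\<^sup>*)"

definition total_mass :: "'a set \<Rightarrow> ('a \<Rightarrow> real) \<Rightarrow> real" where
  "total_mass V m0 = (\<Sum>u\<in>V. m0 u)"

definition bary :: "'a set \<Rightarrow> ('a \<Rightarrow> real) \<Rightarrow> ('a \<Rightarrow> real ^ 'n) \<Rightarrow> real ^ 'n" where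
  "bary V m0 \<phi> = (1 / total_mass V m0) *\<^sub>R (\<Sum>u\<in>V. m0 u *\<^sub>R \<phi> u)"

definition admissible ::
  "'a set \<Rightarrow> 'a set set \<Rightarrow> ('a \<Rightarrow> real) \<Rightarrow> ('a set \<Rightarrow> real) \<Rightarrow> ('a \<Rightarrow> real ^ 'n) \<Rightarrow> bool" where
  "admissible V E m0 d \<phi> \<longleftrightarrow>
     (\<Sum>u\<in>V. m0 u * (norm (\<phi> u))\<^sup>2) = total_mass V m0 \<and>
     (\<forall>u\<in>V. \<forall>v\<in>V. {u, v} \<in> E \<longrightarrow> norm (\<phi> u - \<phi> v) \<le> d {u, v})"

text \<open>delta(G,m0,d), with maps into real^'n (the statement takes CARD('n) = |V|).\<close>
definition delta ::
  "'n::finite itself \<Rightarrow> 'a set \<Rightarrow> 'a set set \<Rightarrow> ('a \<Rightarrow> real) \<Rightarrow> ('a set \<Rightarrow> real) \<Rightarrow> real" where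
  "delta (_ :: 'n::finite itself) V E m0 d =
     Inf {(norm (bary V m0 \<phi>))\<^sup>2 | \<phi> :: 'a \<Rightarrow> real ^ 'n. admissible V E m0 d \<phi>}"

definition laplacian ::
  "'a set \<Rightarrow> 'a set set \<Rightarrow> ('a \<Rightarrow> real) \<Rightarrow> ('a set \<Rightarrow> real) \<Rightarrow> ('a \<Rightarrow> real) \<Rightarrow> 'a \<Rightarrow> real" where
  "laplacian V E m0 m1 f u =
     (1 / m0 u) * ((\<Sum>v\<in>{v\<in>V. {u, v} \<in> E}. m1 {u, v}) * f u
                   - (\<Sum>v\<in>{v\<in>V. {u, v} \<in> E}. m1 {u, v} * f v))"

definition lambda1 ::
  "'a set \<Rightarrow> 'a set set \<Rightarrow> ('a \<Rightarrow> real) \<Rightarrow> ('a set \<Rightarrow> real) \<Rightarrow> real" where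
  "lambda1 V E m0 m1 =
     Inf {t. t > 0 \<and> (\<exists>f. (\<exists>u\<in>V. f u \<noteq> 0) \<and>
                          (\<forall>u\<in>V. laplacian V E m0 m1 f u = t * f u))}"

end

theory Submission
  imports Defs
begin

lemma finite_subseq:
  fixes \<phi>s :: "nat \<Rightarrow> 'a \<Rightarrow> 'b::{heine_borel,real_normed_vector}"
  assumes "finite V" "\<forall>k. \<forall>u\<in>V. norm (\<phi>s k u) \<le> B"
  shows "\<exists>r \<psi>. strict_mono r \<and> (\<forall>u\<in>V. (\<lambda>k. \<phi>s (r k) u) \<longlonglongrightarrow> \<psi> u)"
  using assms
proof (induction V rule: finite_induct)
  case empty
  then show ?case by (auto intro: strict_mono_id)
next
  case (insert x F)
  then obtain r \<psi> where r: "strict_mono r" "\<forall>u\<in>F. (\<lambda>k. \<phi>s (r k) u) \<longlonglongrightarrow> \<psi> u" by auto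
  have "bounded (range (\<lambda>k. \<phi>s (r k) x))"
    using insert.prems by (auto simp: bounded_iff)
  then obtain l r2 where r2: "strict_mono r2" "((\<lambda>k. \<phi>s (r k) x) \<circ> r2) \<longlonglongrightarrow> l"
    using bounded_imp_convergent_subsequence by blast
  have "strict_mono (r \<circ> r2)" using r r2 by (simp add: strict_mono_o)
  moreover have "\<forall>u\<in>insert x F. (\<lambda>k. \<phi>s ((r \<circ> r2) k) u) \<longlonglongrightarrow> (\<psi>(x := l)) u"
  proof
    fix u assume u: "u \<in> insert x F"
    show "(\<lambda>k. \<phi>s ((r \<circ> r2) k) u) \<longlonglongrightarrow> (\<psi>(x := l)) u"
    proof (cases "u = x")
      case True then show ?thesis using r2 by (simp add: o_def)
    next
      case False
      then have "u \<in> F" using u by auto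
      then have "((\<lambda>k. \<phi>s (r k) u) \<circ> r2) \<longlonglongrightarrow> \<psi> u"
        using r(2) r2(1) LIMSEQ_subseq_LIMSEQ by blast
      then show ?thesis using False by (simp add: o_def)
    qed
  qed
  ultimately show ?case by blast
qed

lemma attain_min:
  fixes K :: "('a \<Rightarrow> 'b::{heine_borel,real_normed_vector}) set" and F :: "('a \<Rightarrow> 'b) \<Rightarrow> real"
  assumes fin: "finite V" and ne: "K \<noteq> {}" and bd: "\<forall>\<phi>\<in>K. \<forall>u\<in>V. norm (\<phi> u) \<le> B"
    and cl: "\<And>\<phi>s \<psi>. (\<forall>k. \<phi>s k \<in> K) \<Longrightarrow> (\<forall>u\<in>V. (\<lambda>k. \<phi>s k u) \<longlonglongrightarrow> \<psi> u)
               \<Longrightarrow> \<psi> \<in> K \<and> (\<lambda>k. F (\<phi>s k)) \<longlonglongrightarrow> F \<psi>"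
    and lb: "\<forall>\<phi>\<in>K. c \<le> F \<phi>"
  shows "\<exists>\<psi>\<in>K. \<forall>\<phi>\<in>K. F \<psi> \<le> F \<phi>"
proof -
  define m where "m = Inf (F ` K)"
  have bdd: "bdd_below (F ` K)" using lb by (auto simp: bdd_below_def)
  have "\<forall>k. \<exists>\<phi>\<in>K. F \<phi> < m + 1 / (real k + 1)"
  proof
    fix k
    have "m < m + 1 / (real k + 1)" by simp
    then have "Inf (F ` K) < m + 1 / (real k + 1)" unfolding m_def .
    then show "\<exists>\<phi>\<in>K. F \<phi> < m + 1 / (real k + 1)"
      using ne cInf_less_iff[OF _ bdd] by auto
  qed
  then obtain \<phi>s where \<phi>s: "\<forall>k. \<phi>s k \<in> K \<and> F (\<phi>s k) < m + 1 / (real k + 1)"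
    by metis
  obtain r \<psi> where r: "strict_mono r" "\<forall>u\<in>V. (\<lambda>k. \<phi>s (r k) u) \<longlonglongrightarrow> \<psi> u"
    using finite_subseq[OF fin, of \<phi>s B] bd \<phi>s by auto
  have K: "\<psi> \<in> K" and lim: "(\<lambda>k. F (\<phi>s (r k))) \<longlonglongrightarrow> F \<psi>"
    using cl[of "\<lambda>k. \<phi>s (r k)" \<psi>] r \<phi>s by auto
  have lim2: "(\<lambda>k. m + 1 / (real k + 1)) \<longlonglongrightarrow> m"
    using LIMSEQ_inverse_real_of_nat_add[of m] by (simp add: inverse_eq_divide add.commute)
  have "\<forall>k. F (\<phi>s (r k)) \<le> m + 1 / (real k + 1)"
  proof
    fix k
    have "k \<le> r k" using r(1) seq_suble by blast
    then have "1 / (real (r k) + 1) \<le> 1 / (real k + 1)" by (simp add: frac_le)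
    then show "F (\<phi>s (r k)) \<le> m + 1 / (real k + 1)" using \<phi>s[rule_format, of "r k"] by linarith
  qed
  then have "F \<psi> \<le> m" using LIMSEQ_le[OF lim lim2] by auto
  moreover have "\<forall>\<phi>\<in>K. m \<le> F \<phi>" unfolding m_def using bdd by (auto intro: cInf_lower)
  ultimately show ?thesis using K by force
qed

lemma poly_zero:
  fixes a b :: real
  assumes "\<forall>t. 0 \<le> a * t + b * t^2"
  shows "a = 0"
proof (rule ccontr)
  assume a: "a \<noteq> 0"
  define c where "c = \<bar>b\<bar> + 1"
  define t where "t = - a / (2 * c)"
  have "0 \<le> a * t + b * t^2" using assms by auto
  moreover have "a * t + b * t^2 < 0"
  proof -
    have p: "c > 0" unfolding c_def by simp
    have "a * t + b * t^2 = (a^2 / (2*c)) * (b / (2*c) - 1)"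
      unfolding t_def using p by (simp add: field_simps power2_eq_square)
    moreover have "a^2 / (2*c) > 0" using a p by simp
    moreover have "b / (2*c) - 1 < 0" using p unfolding c_def by (simp add: field_simps)
    ultimately show ?thesis using mult_pos_neg[of "a^2 / (2*c)" "b / (2*c) - 1"] by linarith
  qed
  ultimately show False by simp
qed

locale lapctx =
  fixes V :: "'a set" and E :: "'a set set" and m0 :: "'a \<Rightarrow> real" and m1 :: "'a set \<Rightarrow> real"
  assumes fin: "finite V" and nempty: "V \<noteq> {}" and m0pos: "\<forall>u\<in>V. m0 u > 0"
    and m1nn: "\<forall>e\<in>E. m1 e \<ge> 0" and sg: "simple_graph V E"
begin

definition "MM = total_mass V m0"
definition Aw where "Aw u v = (if {u,v} \<in> E then m1 {u,v} else 0)"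
definition mbar where "mbar f = (\<Sum>u\<in>V. m0 u * f u) / MM"
definition Nq where "Nq f = (\<Sum>u\<in>V. m0 u * (f u - mbar f)^2)"
definition Cf where "Cf f h = (\<Sum>u\<in>V. m0 u * (f u - mbar f) * (h u - mbar h))"
definition Bf where "Bf f g = (\<Sum>u\<in>V. \<Sum>v\<in>V. Aw u v * (f u - f v) * (g u - g v)) / 2"
definition Qf where "Qf f = Bf f f"

lemma MM_pos: "MM > 0"
  unfolding MM_def total_mass_def using fin nempty m0pos by (simp add: sum_pos)

lemma Aw_sym: "Aw u v = Aw v u"
  unfolding Aw_def by (simp add: insert_commute)

lemma Aw_nn: "Aw u v \<ge> 0"
  unfolding Aw_def using m1nn by auto

lemma lap_eq: assumes "u \<in> V"
  shows "m0 u * laplacian V E m0 m1 f u = (\<Sum>v\<in>V. Aw u v * (f u - f v))"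
proof -
  have "m0 u > 0" using assms m0pos by auto
  then have "m0 u * laplacian V E m0 m1 f u =
     (\<Sum>v\<in>{v\<in>V. {u, v} \<in> E}. m1 {u, v}) * f u - (\<Sum>v\<in>{v\<in>V. {u, v} \<in> E}. m1 {u, v} * f v)"
    unfolding laplacian_def by simp
  also have "\<dots> = (\<Sum>v\<in>{v\<in>V. {u, v} \<in> E}. m1 {u, v} * (f u - f v))"
    by (simp add: sum_distrib_right sum_distrib_left sum_subtractf algebra_simps)
  also have "\<dots> = (\<Sum>v\<in>V. Aw u v * (f u - f v))"
    unfolding Aw_def using fin by (auto simp add: sum.inter_filter intro!: sum.cong)
  finally show ?thesis .
qed

lemma parts: "(\<Sum>u\<in>V. m0 u * laplacian V E m0 m1 f u * g u) = Bf f g"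
proof -
  have "(\<Sum>u\<in>V. m0 u * laplacian V E m0 m1 f u * g u) = (\<Sum>u\<in>V. \<Sum>v\<in>V. Aw u v * (f u - f v) * g u)"
    using lap_eq by (simp add: sum_distrib_right)
  moreover have "(\<Sum>u\<in>V. \<Sum>v\<in>V. Aw u v * (f u - f v) * g u) = (\<Sum>u\<in>V. \<Sum>v\<in>V. Aw u v * (f v - f u) * g v)"
    by (subst sum.swap) (simp add: Aw_sym)
  ultimately have "2 * (\<Sum>u\<in>V. m0 u * laplacian V E m0 m1 f u * g u) =
      (\<Sum>u\<in>V. \<Sum>v\<in>V. Aw u v * (f u - f v) * g u) + (\<Sum>u\<in>V. \<Sum>v\<in>V. Aw u v * (f v - f u) * g v)"
    by simp
  also have "\<dots> = (\<Sum>u\<in>V. \<Sum>v\<in>V. Aw u v * (f u - f v) * (g u - g v))"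
    by (simp add: sum.distrib[symmetric] algebra_simps)
  finally show ?thesis unfolding Bf_def by simp
qed

lemma lap_sum0: "(\<Sum>u\<in>V. m0 u * laplacian V E m0 m1 f u) = 0"
  using parts[of f "\<lambda>_. 1"] unfolding Bf_def by simp

lemma Bf_sym: "Bf f g = Bf g f"
  unfolding Bf_def by (simp add: algebra_simps)

lemma Qf_alt: "Qf f = (\<Sum>u\<in>V. \<Sum>v\<in>V. Aw u v * (f u - f v)^2) / 2"
  unfolding Qf_def Bf_def by (simp add: power2_eq_square mult.assoc)

lemma Qf_nn: "Qf f \<ge> 0"
  unfolding Qf_alt using Aw_nn
  by (intro divide_nonneg_pos sum_nonneg) auto

lemma sum_dev0: "(\<Sum>u\<in>V. m0 u * (f u - mbar f)) = 0"
proof -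
  have "(\<Sum>u\<in>V. m0 u * (f u - mbar f)) = (\<Sum>u\<in>V. m0 u * f u) - mbar f * MM"
    unfolding MM_def total_mass_def by (simp add: algebra_simps sum_subtractf sum_distrib_left sum_distrib_right)
  then show ?thesis using MM_pos unfolding mbar_def by simp
qed

lemma Nq_alt2: "Nq f = (\<Sum>u\<in>V. m0 u * (f u - mbar f) * f u)"
proof -
  have "Nq f = (\<Sum>u\<in>V. m0 u * (f u - mbar f) * f u) - mbar f * (\<Sum>u\<in>V. m0 u * (f u - mbar f))"
    unfolding Nq_def by (simp add: sum_distrib_left sum_subtractf[symmetric] power2_eq_square algebra_simps)
  then show ?thesis using sum_dev0 by simp
qed

lemma Nq_alt: "Nq f = (\<Sum>u\<in>V. m0 u * (f u)^2) - MM * (mbar f)^2"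
proof -
  have "Nq f = (\<Sum>u\<in>V. m0 u * (f u)^2) - mbar f * (\<Sum>u\<in>V. m0 u * f u)"
    unfolding Nq_alt2 by (simp add: sum_distrib_left sum_subtractf[symmetric] power2_eq_square algebra_simps)
  moreover have "(\<Sum>u\<in>V. m0 u * f u) = MM * mbar f" unfolding mbar_def using MM_pos by simp
  ultimately show ?thesis by (simp add: power2_eq_square)
qed

lemma mbar_lin: "mbar (\<lambda>u. f u + t * h u) = mbar f + t * mbar h"
  unfolding mbar_def by (simp add: sum.distrib sum_distrib_left algebra_simps add_divide_distrib)

lemma Qf_exp: "Qf (\<lambda>u. f u + t * h u) = Qf f + 2 * t * Bf f h + t^2 * Qf h"
proof -
  have e: "\<And>u v. Aw u v * ((f u + t * h u) - (f v + t * h v)) * ((f u + t * h u) - (f v + t * h v)) =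
    Aw u v * (f u - f v) * (f u - f v) + 2 * t * (Aw u v * (f u - f v) * (h u - h v))
    + t^2 * (Aw u v * (h u - h v) * (h u - h v))"
    by (simp add: algebra_simps power2_eq_square)
  show ?thesis unfolding Qf_def Bf_def
    by (simp only: e sum.distrib sum_distrib_left[symmetric]) (simp add: field_simps)
qed

lemma Nq_exp: "Nq (\<lambda>u. f u + t * h u) = Nq f + 2 * t * Cf f h + t^2 * Nq h"
proof -
  have e: "\<And>u. m0 u * ((f u + t * h u) - (mbar f + t * mbar h))^2 =
    m0 u * (f u - mbar f)^2 + 2 * t * (m0 u * (f u - mbar f) * (h u - mbar h))
    + t^2 * (m0 u * (h u - mbar h)^2)"
    by (simp add: algebra_simps power2_eq_square)
  show ?thesis unfolding Nq_def Cf_def mbar_lin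
    by (simp only: e sum.distrib sum_distrib_left[symmetric])
qed

lemma variation:
  assumes ray: "\<forall>g. \<mu> * Nq g \<le> Qf g" and eq: "Qf f = \<mu> * Nq f"
  shows "\<forall>u\<in>V. laplacian V E m0 m1 f u = \<mu> * (f u - mbar f)"
proof
  fix u assume u: "u \<in> V"
  define h where "h = (\<lambda>w. if w = u then 1 else (0::real))"
  have "\<forall>t. 0 \<le> 2 * (Bf f h - \<mu> * Cf f h) * t + (Qf h - \<mu> * Nq h) * t^2"
  proof
    fix t
    have "\<mu> * Nq (\<lambda>w. f w + t * h w) \<le> Qf (\<lambda>w. f w + t * h w)" using ray by blast
    then show "0 \<le> 2 * (Bf f h - \<mu> * Cf f h) * t + (Qf h - \<mu> * Nq h) * t^2"
      unfolding Qf_exp Nq_exp using eq by (simp add: algebra_simps)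
  qed
  from poly_zero[OF this] have B: "Bf f h = \<mu> * Cf f h" by simp
  have "Bf f h = m0 u * laplacian V E m0 m1 f u"
    unfolding parts[symmetric] h_def using u fin by (simp add: if_distrib sum.delta cong: if_cong)
  moreover have "Cf f h = m0 u * (f u - mbar f)"
  proof -
    have "Cf f h = (\<Sum>w\<in>V. m0 w * (f w - mbar f) * h w) - mbar h * (\<Sum>w\<in>V. m0 w * (f w - mbar f))"
      unfolding Cf_def by (simp add: sum_distrib_left sum_subtractf[symmetric] algebra_simps)
    also have "\<dots> = m0 u * (f u - mbar f)"
      using sum_dev0 u fin unfolding h_def by (simp add: if_distrib sum.delta cong: if_cong)
    finally show ?thesis .
  qed
  ultimately show "laplacian V E m0 m1 f u = \<mu> * (f u - mbar f)"
    using B u m0pos by (metis (no_types, lifting) mult.left_commute mult_cancel_left order_less_irrefl)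
qed

end

context lapctx begin

lemma Nq_nn: "Nq f \<ge> 0"
  unfolding Nq_def using m0pos by (auto intro!: sum_nonneg)

lemma abs_le_1sq: "\<bar>x::real\<bar> \<le> 1 + x^2"
proof (cases "\<bar>x\<bar> \<le> 1")
  case True then show ?thesis by (simp add: add_increasing2)
next
  case False
  then have "\<bar>x\<bar> * 1 \<le> \<bar>x\<bar> * \<bar>x\<bar>" by (intro mult_left_mono) auto
  then show ?thesis by (simp add: power2_eq_square abs_mult_self)
qed

lemma Qf_affine: "Qf (\<lambda>u. c * f u + k) = c^2 * Qf f"
proof -
  have e: "\<And>u v. Aw u v * ((c * f u + k) - (c * f v + k))^2 = c^2 * (Aw u v * (f u - f v)^2)"
    by (simp add: algebra_simps power2_eq_square)
  show ?thesis unfolding Qf_alt by (simp only: e sum_distrib_left[symmetric])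
qed

lemma Qf_zero_const:
  assumes conn: "graph_connected V {e\<in>E. m1 e > 0}" and q: "Qf f = 0"
  shows "\<forall>u\<in>V. \<forall>v\<in>V. f u = f v"
proof -
  have nn: "\<And>u v. 0 \<le> Aw u v * (f u - f v)^2" using Aw_nn by simp
  have s0: "(\<Sum>u\<in>V. \<Sum>v\<in>V. Aw u v * (f u - f v)^2) = 0" using q unfolding Qf_alt by simp
  have nn2: "\<And>u. 0 \<le> (\<Sum>v\<in>V. Aw u v * (f u - f v)^2)" by (simp add: sum_nonneg nn)
  have h1: "\<forall>u\<in>V. (\<Sum>v\<in>V. Aw u v * (f u - f v)^2) = 0"
  proof -
    have "(\<Sum>u\<in>V. \<Sum>v\<in>V. Aw u v * (f u - f v)^2) = 0 \<longleftrightarrow> (\<forall>u\<in>V. (\<Sum>v\<in>V. Aw u v * (f u - f v)^2) = 0)"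
      by (rule sum_nonneg_eq_0_iff[OF fin]) (rule nn2)
    then show ?thesis using s0 by blast
  qed
  have terms: "\<forall>u\<in>V. \<forall>v\<in>V. Aw u v * (f u - f v)^2 = 0"
  proof
    fix u assume "u \<in> V"
    then have "(\<Sum>v\<in>V. Aw u v * (f u - f v)^2) = 0" using h1 by blast
    show "\<forall>v\<in>V. Aw u v * (f u - f v)^2 = 0"
    proof -
      have "(\<Sum>v\<in>V. Aw u v * (f u - f v)^2) = 0 \<longleftrightarrow> (\<forall>v\<in>V. Aw u v * (f u - f v)^2 = 0)"
        by (rule sum_nonneg_eq_0_iff[OF fin]) (rule nn)
      then show ?thesis using \<open>(\<Sum>v\<in>V. Aw u v * (f u - f v)^2) = 0\<close> by blast
    qed
  qed
  have edge: "f y = f z" if "{y, z} \<in> {e\<in>E. m1 e > 0}" for y z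
  proof -
    have sgE: "\<forall>e\<in>E. \<exists>u v. u \<noteq> v \<and> u \<in> V \<and> v \<in> V \<and> e = {u, v}"
      using sg unfolding simple_graph_def by simp
    have "{y, z} \<in> E" using that by simp
    then have "\<exists>u v. u \<noteq> v \<and> u \<in> V \<and> v \<in> V \<and> {y, z} = {u, v}" by (rule bspec[OF sgE])
    then obtain p q where pq: "p \<noteq> q" "p \<in> V" "q \<in> V" "{y, z} = {p, q}" by blast
    then have yz: "y \<in> V" "z \<in> V" by (auto simp: doubleton_eq_iff)
    have "Aw y z > 0" using that unfolding Aw_def by auto
    moreover have "Aw y z * (f y - f z)^2 = 0" using terms yz by blast
    ultimately show ?thesis by simp
  qed
  show ?thesis
  proof (intro ballI)
    fix u v assume u: "u \<in> V" and v: "v \<in> V"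
    have "(u, v) \<in> {(x, y). {x, y} \<in> {e\<in>E. m1 e > 0}}\<^sup>*"
      using conn u v unfolding graph_connected_def by blast
    then show "f u = f v"
    proof (induction rule: rtrancl_induct)
      case base then show ?case by simp
    next
      case (step y z) then show ?case using edge by auto
    qed
  qed
qed

definition "WW = {f. (\<Sum>u\<in>V. m0 u * f u) = 0 \<and> (\<Sum>u\<in>V. m0 u * (f u)^2) = 1}"

lemma normalize_W:
  assumes "Nq f > 0"
  shows "(\<lambda>u. (1 / sqrt (Nq f)) * f u + (- mbar f / sqrt (Nq f))) \<in> WW"
    and "Qf (\<lambda>u. (1 / sqrt (Nq f)) * f u + (- mbar f / sqrt (Nq f))) = Qf f / Nq f"
proof -
  define s where "s = sqrt (Nq f)"
  have s: "s > 0" "s^2 = Nq f" using assms unfolding s_def by auto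
  have e: "\<And>u. (1 / s) * f u + (- mbar f / s) = (f u - mbar f) / s" by (simp add: diff_divide_distrib)
  have "(\<Sum>u\<in>V. m0 u * ((f u - mbar f) / s)) = (\<Sum>u\<in>V. m0 u * (f u - mbar f)) / s"
    by (simp add: sum_divide_distrib)
  moreover have "(\<Sum>u\<in>V. m0 u * ((f u - mbar f) / s)^2) = Nq f / s^2"
    unfolding Nq_def by (simp add: sum_divide_distrib power_divide)
  ultimately show "(\<lambda>u. (1 / sqrt (Nq f)) * f u + (- mbar f / sqrt (Nq f))) \<in> WW"
    unfolding WW_def s_def[symmetric] e using sum_dev0 s assms by simp
  show "Qf (\<lambda>u. (1 / sqrt (Nq f)) * f u + (- mbar f / sqrt (Nq f))) = Qf f / Nq f"
    unfolding Qf_affine using assms by (simp add: power_divide)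
qed

lemma W_mbar: "f \<in> WW \<Longrightarrow> mbar f = 0" unfolding WW_def mbar_def by simp

lemma W_Nq: "f \<in> WW \<Longrightarrow> Nq f = 1" using W_mbar unfolding Nq_alt by (simp add: WW_def)

lemma W_bound: "\<forall>f\<in>WW. \<forall>u\<in>V. norm (f u) \<le> 1 + (\<Sum>v\<in>V. 1 / m0 v)"
proof (intro ballI)
  fix f u assume f: "f \<in> WW" and u: "u \<in> V"
  have "m0 u * (f u)^2 \<le> (\<Sum>v\<in>V. m0 v * (f v)^2)"
    using u fin m0pos by (intro member_le_sum) auto
  then have "m0 u * (f u)^2 \<le> 1" using f unfolding WW_def by simp
  then have "(f u)^2 \<le> 1 / m0 u" using m0pos u by (simp add: field_simps)
  also have "\<dots> \<le> (\<Sum>v\<in>V. 1 / m0 v)"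
    using u fin m0pos by (intro member_le_sum) (auto simp: less_imp_le)
  finally show "norm (f u) \<le> 1 + (\<Sum>v\<in>V. 1 / m0 v)" using abs_le_1sq[of "f u"] by simp
qed

lemma W_closed:
  assumes "\<forall>k. fs k \<in> WW" "\<forall>u\<in>V. (\<lambda>k. fs k u) \<longlonglongrightarrow> g u"
  shows "g \<in> WW \<and> (\<lambda>k. Qf (fs k)) \<longlonglongrightarrow> Qf g"
proof -
  have l1: "(\<lambda>k. \<Sum>u\<in>V. m0 u * fs k u) \<longlonglongrightarrow> (\<Sum>u\<in>V. m0 u * g u)"
    using assms(2) by (intro tendsto_intros) auto
  have l2: "(\<lambda>k. \<Sum>u\<in>V. m0 u * (fs k u)^2) \<longlonglongrightarrow> (\<Sum>u\<in>V. m0 u * (g u)^2)"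
    using assms(2) by (intro tendsto_intros) auto
  have e1: "(\<lambda>k. \<Sum>u\<in>V. m0 u * fs k u) = (\<lambda>k. 0)" and e2: "(\<lambda>k. \<Sum>u\<in>V. m0 u * (fs k u)^2) = (\<lambda>k. 1)"
    using assms(1) unfolding WW_def by auto
  have z1: "(\<lambda>k. \<Sum>u\<in>V. m0 u * fs k u) \<longlonglongrightarrow> 0" unfolding e1 by simp
  have z2: "(\<lambda>k. \<Sum>u\<in>V. m0 u * (fs k u)^2) \<longlonglongrightarrow> 1" unfolding e2 by simp
  have "(\<Sum>u\<in>V. m0 u * g u) = 0" "(\<Sum>u\<in>V. m0 u * (g u)^2) = 1"
    using LIMSEQ_unique[OF l1 z1] LIMSEQ_unique[OF l2 z2] by auto
  moreover have "(\<lambda>k. Qf (fs k)) \<longlonglongrightarrow> Qf g"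
    unfolding Qf_alt using assms(2) by (intro tendsto_intros) auto
  ultimately show ?thesis unfolding WW_def by auto
qed

lemma lambda_facts:
  assumes conn: "graph_connected V {e\<in>E. m1 e > 0}"
  shows "(\<forall>f. lambda1 V E m0 m1 * Nq f \<le> Qf f)
    \<and> (\<forall>f. Qf f = lambda1 V E m0 m1 * Nq f \<longrightarrow>
          (\<forall>u\<in>V. laplacian V E m0 m1 f u = lambda1 V E m0 m1 * (f u - mbar f)))
    \<and> (lambda1 V E m0 m1 > 0 \<or> (E = {} \<and> (\<forall>f. Nq f = 0)))"
proof (cases "\<exists>a\<in>V. \<exists>b\<in>V. a \<noteq> b")
  case False
  then obtain a where Va: "V = {a}" using nempty by blast
  have E0: "E = {}" using sg False unfolding simple_graph_def by blast
  have A0: "\<And>u v. Aw u v = 0" unfolding Aw_def using E0 by simp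
  have N0: "\<And>f. Nq f = 0"
  proof -
    fix f
    have "m0 a > 0" using m0pos Va by auto
    then have "mbar f = f a" unfolding mbar_def MM_def total_mass_def using Va by simp
    then show "Nq f = 0" unfolding Nq_def using Va by simp
  qed
  have Q0: "\<And>f. Qf f = 0" unfolding Qf_alt A0 by simp
  have L0: "\<And>f u. u \<in> V \<Longrightarrow> laplacian V E m0 m1 f u = 0"
  proof -
    fix f u assume u: "u \<in> V"
    have "m0 u * laplacian V E m0 m1 f u = 0" using lap_eq[OF u] A0 by simp
    then show "laplacian V E m0 m1 f u = 0" using m0pos u by auto
  qed
  have M0: "\<And>f u. u \<in> V \<Longrightarrow> f u - mbar f = 0"
  proof -
    fix f u assume u: "u \<in> V"
    have "m0 a > 0" using m0pos Va by auto
    then have "mbar f = f a" unfolding mbar_def MM_def total_mass_def using Va by simp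
    then show "f u - mbar f = 0" using u Va by simp
  qed
  show ?thesis using N0 Q0 L0 M0 E0 by simp
next
  case True
  then obtain a b where ab: "a \<in> V" "b \<in> V" "a \<noteq> b" by blast
  define ia where "ia = (\<lambda>w. if w = a then (1::real) else 0)"
  have "Nq ia > 0"
  proof -
    have ma: "m0 a > 0" "m0 b > 0" using ab m0pos by auto
    have e1: "\<And>u. m0 u * (ia u)^2 = (if u = a then m0 a else 0)" by (simp add: ia_def)
    have s1: "(\<Sum>u\<in>V. m0 u * (ia u)^2) = m0 a" unfolding e1 using ab fin by simp
    have s2: "mbar ia = m0 a / MM" unfolding ia_def mbar_def using ab fin
      by (simp add: if_distrib sum.delta cong: if_cong)
    have "m0 a + m0 b = sum m0 {a, b}" using ab by simp
    also have "\<dots> \<le> MM" unfolding MM_def total_mass_def using ab fin m0pos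
      by (intro sum_mono2) (auto simp: less_imp_le)
    finally have "m0 a < MM" using ma by simp
    then have "m0 a / MM < 1" using MM_pos by simp
    then have "m0 a * (m0 a / MM) < m0 a * 1" using ma by (intro mult_strict_left_mono) auto
    then have "MM * (m0 a / MM)^2 < m0 a" using MM_pos by (simp add: power2_eq_square field_simps)
    then show ?thesis unfolding Nq_alt s1 s2 by simp
  qed
  then have Wne: "WW \<noteq> {}" using normalize_W by blast
  obtain g where g: "g \<in> WW" "\<forall>f\<in>WW. Qf g \<le> Qf f"
  proof -
    have "\<forall>\<phi>\<in>WW. 0 \<le> Qf \<phi>" using Qf_nn by simp
    from attain_min[OF fin Wne W_bound W_closed this] show ?thesis using that by blast
  qed
  define \<mu> where "\<mu> = Qf g"
  have ray: "\<forall>f. \<mu> * Nq f \<le> Qf f"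
  proof
    fix f
    show "\<mu> * Nq f \<le> Qf f"
    proof (cases "Nq f = 0")
      case True then show ?thesis using Qf_nn by simp
    next
      case False
      then have pos: "Nq f > 0" using Nq_nn order_le_neq_trans by metis
      have "Qf g \<le> Qf (\<lambda>u. (1 / sqrt (Nq f)) * f u + (- mbar f / sqrt (Nq f)))"
        using g(2) normalize_W(1)[OF pos] by blast
      then have "\<mu> \<le> Qf f / Nq f" unfolding \<mu>_def normalize_W(2)[OF pos] .
      then show ?thesis using pos by (simp add: field_simps)
    qed
  qed
  have var: "\<forall>f. Qf f = \<mu> * Nq f \<longrightarrow> (\<forall>u\<in>V. laplacian V E m0 m1 f u = \<mu> * (f u - mbar f))"
    using variation[OF ray] by blast
  have gN: "Nq g = 1" "mbar g = 0" using W_Nq W_mbar g by auto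
  have mupos: "\<mu> > 0"
  proof (rule ccontr)
    assume "\<not> \<mu> > 0"
    then have "Qf g = 0" using Qf_nn unfolding \<mu>_def by (simp add: order.antisym)
    then have c: "\<forall>u\<in>V. g u = g a" using Qf_zero_const[OF conn] ab by blast
    have "(\<Sum>u\<in>V. m0 u * g u) = g a * MM" unfolding MM_def total_mass_def using c
      by (simp add: sum_distrib_left mult.commute)
    then have "g a = 0" using g(1) MM_pos unfolding WW_def by simp
    then have "(\<Sum>u\<in>V. m0 u * (g u)^2) = 0" using c by simp
    then show False using g(1) unfolding WW_def by simp
  qed
  define S where "S = {t. t > 0 \<and> (\<exists>f. (\<exists>u\<in>V. f u \<noteq> 0) \<and>
                          (\<forall>u\<in>V. laplacian V E m0 m1 f u = t * f u))}"
  have muS: "\<mu> \<in> S"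
  proof -
    have "\<forall>u\<in>V. laplacian V E m0 m1 g u = \<mu> * g u" using var gN unfolding \<mu>_def by simp
    moreover have "\<exists>u\<in>V. g u \<noteq> 0"
    proof (rule ccontr)
      assume "\<not> (\<exists>u\<in>V. g u \<noteq> 0)"
      then have "(\<Sum>u\<in>V. m0 u * (g u)^2) = 0" by simp
      then show False using g(1) unfolding WW_def by simp
    qed
    ultimately show ?thesis unfolding S_def using mupos by blast
  qed
  have muleS: "\<mu> \<le> t" if tS: "t \<in> S" for t
  proof -
    obtain f u0 where f: "u0 \<in> V" "f u0 \<noteq> 0" "\<forall>u\<in>V. laplacian V E m0 m1 f u = t * f u" and t: "t > 0"
      using tS unfolding S_def by blast
    have "t * (\<Sum>u\<in>V. m0 u * f u) = (\<Sum>u\<in>V. m0 u * laplacian V E m0 m1 f u)"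
      using f(3) by (simp add: sum_distrib_left algebra_simps)
    then have "(\<Sum>u\<in>V. m0 u * f u) = 0" using lap_sum0 t by simp
    then have mb: "mbar f = 0" unfolding mbar_def by simp
    have "Qf f = (\<Sum>u\<in>V. m0 u * laplacian V E m0 m1 f u * f u)" unfolding Qf_def parts ..
    also have "\<dots> = t * (\<Sum>u\<in>V. m0 u * f u * f u)"
      using f(3) by (simp add: sum_distrib_left algebra_simps)
    also have "\<dots> = t * Nq f" unfolding Nq_alt2 mb by simp
    finally have Q: "Qf f = t * Nq f" .
    have "m0 u0 * (f u0)^2 \<le> (\<Sum>u\<in>V. m0 u * (f u)^2)"
      using f(1) fin m0pos by (intro member_le_sum) auto
    moreover have "m0 u0 * (f u0)^2 > 0" using f m0pos by auto
    ultimately have "Nq f > 0" unfolding Nq_alt mb by simp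
    then show ?thesis using ray[rule_format, of f] Q by simp
  qed
  have lam: "lambda1 V E m0 m1 = \<mu>"
    unfolding lambda1_def S_def[symmetric] using muS muleS by (intro cInf_eq_minimum) auto
  show ?thesis unfolding lam using ray var mupos by blast
qed

end

lemma edge_sum:
  fixes g :: "'a set \<Rightarrow> real" and V :: "'a set" and E :: "'a set set"
  assumes sg: "simple_graph V E"
  shows "(\<Sum>e\<in>E. g e) = (\<Sum>u\<in>V. \<Sum>v\<in>V. if {u,v} \<in> E then g {u,v} else 0) / 2"
proof -
  have fin: "finite V" using sg unfolding simple_graph_def by simp
  define P where "P = {p \<in> V \<times> V. {fst p, snd p} \<in> E}"
  define k where "k = (\<lambda>p::'a \<times> 'a. {fst p, snd p})"
  have finP: "finite P" unfolding P_def using fin by simp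
  have "(\<Sum>u\<in>V. \<Sum>v\<in>V. if {u,v} \<in> E then g {u,v} else 0)
      = (\<Sum>p\<in>V \<times> V. if {fst p, snd p} \<in> E then g {fst p, snd p} else 0)"
    by (simp add: sum.cartesian_product case_prod_beta)
  also have "\<dots> = (\<Sum>p\<in>P. g (k p))"
    unfolding P_def k_def using fin by (simp add: sum.inter_filter)
  also have "\<dots> = (\<Sum>e\<in>k ` P. \<Sum>p\<in>{p. p \<in> P \<and> k p = e}. g (k p))"
    by (rule sum.image_gen[OF finP])
  also have "\<dots> = (\<Sum>e\<in>E. 2 * g e)"
  proof -
    have kP: "k ` P = E"
    proof
      show "k ` P \<subseteq> E" unfolding P_def k_def by auto
      show "E \<subseteq> k ` P"
      proof
        fix e assume e: "e \<in> E"
        then obtain a b where "a \<noteq> b" "a \<in> V" "b \<in> V" "e = {a, b}"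
          using sg unfolding simple_graph_def by blast
        then show "e \<in> k ` P" unfolding P_def k_def using e by (auto intro!: image_eqI[of _ _ "(a,b)"])
      qed
    qed
    have two: "(\<Sum>p\<in>{p. p \<in> P \<and> k p = e}. g (k p)) = 2 * g e" if e: "e \<in> E" for e
    proof -
      obtain a b where ab: "a \<noteq> b" "a \<in> V" "b \<in> V" "e = {a, b}"
        using sg e unfolding simple_graph_def by blast
      have "{p. p \<in> P \<and> k p = e} = {(a,b), (b,a)}"
        unfolding P_def k_def using ab e by (auto simp: doubleton_eq_iff insert_commute)
      moreover have "\<forall>p\<in>{(a,b), (b,a)}. g (k p) = g e" unfolding k_def using ab by (auto simp: insert_commute)
      ultimately show ?thesis using ab by simp
    qed
    show ?thesis by (simp only: kP) (rule sum.cong[OF refl two])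
  qed
  finally show ?thesis by (simp add: sum_distrib_left[symmetric])
qed

lemma norm_sq_vec: "(norm (x :: real ^ 'n))^2 = (\<Sum>i\<in>UNIV. (x $ i)^2)"
  unfolding norm_vec_def L2_set_def by (simp add: sum_nonneg)

context lapctx begin

lemma mbar_comp: "mbar (\<lambda>w. \<phi> w $ i) = bary V m0 \<phi> $ i"
  unfolding mbar_def bary_def MM_def by simp

lemma SQ: "(\<Sum>i\<in>UNIV. Qf (\<lambda>w. (\<phi> w :: real ^ 'n) $ i)) = (\<Sum>u\<in>V. \<Sum>v\<in>V. Aw u v * (norm (\<phi> u - \<phi> v))^2) / 2"
proof -
  have "(\<Sum>i\<in>UNIV. Qf (\<lambda>w. \<phi> w $ i)) = (\<Sum>i\<in>UNIV. \<Sum>u\<in>V. \<Sum>v\<in>V. Aw u v * (\<phi> u $ i - \<phi> v $ i)^2) / 2"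
    unfolding Qf_alt by (simp add: sum_divide_distrib)
  also have "\<dots> = (\<Sum>u\<in>V. \<Sum>v\<in>V. \<Sum>i\<in>UNIV. Aw u v * (\<phi> u $ i - \<phi> v $ i)^2) / 2"
    by (simp add: sum.swap[of _ UNIV])
  also have "\<dots> = (\<Sum>u\<in>V. \<Sum>v\<in>V. Aw u v * (norm (\<phi> u - \<phi> v))^2) / 2"
    by (simp add: norm_sq_vec sum_distrib_left)
  finally show ?thesis .
qed

lemma SN: "(\<Sum>i\<in>UNIV. Nq (\<lambda>w. (\<phi> w :: real ^ 'n) $ i)) = (\<Sum>u\<in>V. m0 u * (norm (\<phi> u))^2) - MM * (norm (bary V m0 \<phi>))^2"
proof -
  have "(\<Sum>i\<in>UNIV. Nq (\<lambda>w. \<phi> w $ i)) = (\<Sum>i\<in>UNIV. (\<Sum>u\<in>V. m0 u * (\<phi> u $ i)^2) - MM * (bary V m0 \<phi> $ i)^2)"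
    unfolding Nq_alt mbar_comp ..
  also have "\<dots> = (\<Sum>u\<in>V. m0 u * (norm (\<phi> u))^2) - MM * (norm (bary V m0 \<phi>))^2"
    by (simp add: sum_subtractf norm_sq_vec sum_distrib_left sum.swap[of _ UNIV])
  finally show ?thesis .
qed

end

theorem proposition1p5:
  fixes V :: "'a set" and E :: "'a set set"
    and m0 :: "'a \<Rightarrow> real" and d m1 :: "'a set \<Rightarrow> real"
  assumes graph: "simple_graph V E" and conn: "graph_connected V E"
    and dimV: "CARD('n) = card V"
    and m0_pos: "\<forall>u\<in>V. m0 u > 0"
    and d_pos: "\<forall>e\<in>E. d e > 0"
    and m1_nonneg: "\<forall>e\<in>E. m1 e \<ge> 0"
    and m1_conn: "graph_connected V {e\<in>E. m1 e > 0}"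
    and m1_D: "(\<Sum>e\<in>E. m1 e * (d e)\<^sup>2) = (\<Sum>e\<in>E. (d e)\<^sup>2)"
  shows "delta TYPE('n) V E m0 d \<ge>
           1 - ((\<Sum>e\<in>E. (d e)\<^sup>2) / total_mass V m0) / lambda1 V E m0 m1
      \<and> (delta TYPE('n) V E m0 d =
           1 - ((\<Sum>e\<in>E. (d e)\<^sup>2) / total_mass V m0) / lambda1 V E m0 m1
         \<longleftrightarrow> (\<exists>\<phi> :: 'a \<Rightarrow> real ^ 'n. admissible V E m0 d \<phi>
              \<and> (\<forall>u\<in>V. \<forall>v\<in>V. {u, v} \<in> E \<longrightarrow>
                   m1 {u, v} * ((d {u, v})\<^sup>2 - (norm (\<phi> u - \<phi> v))\<^sup>2) = 0)
              \<and> (\<forall>u\<in>V. \<forall>i. laplacian V E m0 m1 (\<lambda>w. \<phi> w $ i) u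
                   = lambda1 V E m0 m1 * (\<phi> u $ i - bary V m0 \<phi> $ i))))"
proof -
  have fin: "finite V" using graph unfolding simple_graph_def by simp
  have Vne: "V \<noteq> {}" using conn unfolding graph_connected_def by simp
  interpret L: lapctx V E m0 m1
    using fin Vne m0_pos m1_nonneg graph by unfold_locales auto
  note LF = L.lambda_facts[OF m1_conn]
  define lam where "lam = lambda1 V E m0 m1"
  define D2 where "D2 = (\<Sum>e\<in>E. (d e)\<^sup>2)"
  define MM where "MM = total_mass V m0"
  define B0 where "B0 = 1 - (D2 / MM) / lam"
  have MMe: "L.MM = MM" unfolding MM_def L.MM_def ..
  have Mpos: "MM > 0" using L.MM_pos MMe by simp
  have P1: "\<forall>f. lam * L.Nq f \<le> L.Qf f" using LF unfolding lam_def by blast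
  have P2: "\<forall>f. L.Qf f = lam * L.Nq f \<longrightarrow> (\<forall>u\<in>V. laplacian V E m0 m1 f u = lam * (f u - L.mbar f))"
    using LF unfolding lam_def by blast
  have P3: "lam > 0 \<or> (E = {} \<and> (\<forall>f. L.Nq f = 0))" using LF unfolding lam_def by blast
  have D2A: "D2 = (\<Sum>u\<in>V. \<Sum>v\<in>V. L.Aw u v * (d {u,v})^2) / 2"
  proof -
    have "D2 = (\<Sum>e\<in>E. m1 e * (d e)\<^sup>2)" unfolding D2_def using m1_D by simp
    also have "\<dots> = (\<Sum>u\<in>V. \<Sum>v\<in>V. if {u,v} \<in> E then m1 {u,v} * (d {u,v})^2 else 0) / 2"
      by (rule edge_sum[OF graph])
    also have "\<dots> = (\<Sum>u\<in>V. \<Sum>v\<in>V. L.Aw u v * (d {u,v})^2) / 2"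
      unfolding L.Aw_def by (auto intro!: sum.cong)
    finally show ?thesis .
  qed
  define SQ where "SQ = (\<lambda>\<phi> :: 'a \<Rightarrow> real ^ 'n. \<Sum>i\<in>UNIV. L.Qf (\<lambda>w. \<phi> w $ i))"
  define SN where "SN = (\<lambda>\<phi> :: 'a \<Rightarrow> real ^ 'n. \<Sum>i\<in>UNIV. L.Nq (\<lambda>w. \<phi> w $ i))"
  define nb where "nb = (\<lambda>\<phi> :: 'a \<Rightarrow> real ^ 'n. (norm (bary V m0 \<phi>))^2)"
  have adm_SN: "SN \<phi> = MM - MM * nb \<phi>" if "admissible V E m0 d \<phi>" for \<phi>
    using that unfolding SN_def nb_def L.SN admissible_def MMe MM_def by simp
  have adm_SQ: "SQ \<phi> \<le> D2" if adm: "admissible V E m0 d \<phi>" for \<phi>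
  proof -
    have "SQ \<phi> = (\<Sum>u\<in>V. \<Sum>v\<in>V. L.Aw u v * (norm (\<phi> u - \<phi> v))^2) / 2"
      unfolding SQ_def L.SQ ..
    also have "\<dots> \<le> (\<Sum>u\<in>V. \<Sum>v\<in>V. L.Aw u v * (d {u,v})^2) / 2"
    proof -
      have "L.Aw u v * (norm (\<phi> u - \<phi> v))^2 \<le> L.Aw u v * (d {u,v})^2" if "u \<in> V" "v \<in> V" for u v
      proof (cases "{u,v} \<in> E")
        case True
        then have "norm (\<phi> u - \<phi> v) \<le> d {u,v}" using adm that unfolding admissible_def by blast
        then have "(norm (\<phi> u - \<phi> v))^2 \<le> (d {u,v})^2" by (simp add: power_mono)
        then show ?thesis using L.Aw_nn by (simp add: mult_left_mono)
      next
        case False then show ?thesis unfolding L.Aw_def by simp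
      qed
      then show ?thesis by (intro divide_right_mono sum_mono) auto
    qed
    finally show ?thesis using D2A by simp
  qed
  have lamSN: "lam * SN \<phi> \<le> SQ \<phi>" for \<phi>
    unfolding SN_def SQ_def using P1 by (simp add: sum_distrib_left sum_mono)
  have LB: "B0 \<le> nb \<phi>" if adm: "admissible V E m0 d \<phi>" for \<phi>
  proof (cases "lam > 0")
    case True
    have "lam * (MM - MM * nb \<phi>) \<le> D2" using lamSN[of \<phi>] adm_SQ[OF adm] adm_SN[OF adm] by simp
    then have "MM * (1 - nb \<phi>) \<le> D2 / lam" using True by (simp add: field_simps)
    then have "1 - nb \<phi> \<le> D2 / lam / MM" using Mpos by (subst pos_le_divide_eq) (auto simp: mult.commute)
    moreover have "D2 / MM / lam = D2 / lam / MM" by simp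
    ultimately show ?thesis unfolding B0_def by linarith
  next
    case False
    then have E0: "E = {}" and N0: "\<forall>f. L.Nq f = 0" using P3 by auto
    have "SN \<phi> = 0" unfolding SN_def using N0 by simp
    then have "nb \<phi> = 1" using adm_SN[OF adm] Mpos by simp
    moreover have "D2 = 0" unfolding D2_def E0 by simp
    ultimately show ?thesis unfolding B0_def by simp
  qed
  define Sd where "Sd = {(norm (bary V m0 \<phi>))\<^sup>2 | \<phi> :: 'a \<Rightarrow> real ^ 'n. admissible V E m0 d \<phi>}"
  have delta_eq: "delta TYPE('n) V E m0 d = Inf Sd" unfolding delta_def Sd_def ..
  obtain x0 :: "real ^ 'n" where x0: "norm x0 = 1" using vector_choose_size[of 1] by auto
  have adm0: "admissible V E m0 d (\<lambda>_. x0)"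
    unfolding admissible_def total_mass_def using x0 d_pos by auto
  have Sdne: "Sd \<noteq> {}" unfolding Sd_def using adm0 by blast
  have Sdbdd: "bdd_below Sd" unfolding Sd_def by (auto intro!: bdd_belowI[of _ 0])
  have part1: "B0 \<le> delta TYPE('n) V E m0 d"
    unfolding delta_eq using Sdne LB unfolding Sd_def nb_def by (auto intro!: cInf_greatest)
  have eig_Q: "L.Qf f = lam * L.Nq f" if "\<forall>u\<in>V. laplacian V E m0 m1 f u = lam * (f u - L.mbar f)" for f
  proof -
    have "L.Qf f = (\<Sum>u\<in>V. m0 u * laplacian V E m0 m1 f u * f u)" unfolding L.Qf_def L.parts ..
    also have "\<dots> = (\<Sum>u\<in>V. lam * (m0 u * (f u - L.mbar f) * f u))"
      using that by (intro sum.cong) auto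
    also have "\<dots> = lam * (\<Sum>u\<in>V. m0 u * (f u - L.mbar f) * f u)"
      by (simp add: sum_distrib_left)
    also have "\<dots> = lam * L.Nq f" unfolding L.Nq_alt2 ..
    finally show ?thesis .
  qed
  have part2: "delta TYPE('n) V E m0 d = B0" if ex: "\<exists>\<phi> :: 'a \<Rightarrow> real ^ 'n. admissible V E m0 d \<phi>
              \<and> (\<forall>u\<in>V. \<forall>v\<in>V. {u, v} \<in> E \<longrightarrow>
                   m1 {u, v} * ((d {u, v})\<^sup>2 - (norm (\<phi> u - \<phi> v))\<^sup>2) = 0)
              \<and> (\<forall>u\<in>V. \<forall>i. laplacian V E m0 m1 (\<lambda>w. \<phi> w $ i) u
                   = lambda1 V E m0 m1 * (\<phi> u $ i - bary V m0 \<phi> $ i))"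
  proof -
    obtain \<phi> :: "'a \<Rightarrow> real ^ 'n" where adm: "admissible V E m0 d \<phi>"
      and c1: "\<forall>u\<in>V. \<forall>v\<in>V. {u, v} \<in> E \<longrightarrow> m1 {u, v} * ((d {u, v})\<^sup>2 - (norm (\<phi> u - \<phi> v))\<^sup>2) = 0"
      and c2: "\<forall>u\<in>V. \<forall>i. laplacian V E m0 m1 (\<lambda>w. \<phi> w $ i) u = lam * (\<phi> u $ i - bary V m0 \<phi> $ i)"
      using ex unfolding lam_def by blast
    have "SQ \<phi> = D2"
    proof -
      have "L.Aw u v * (norm (\<phi> u - \<phi> v))^2 = L.Aw u v * (d {u,v})^2" if "u \<in> V" "v \<in> V" for u v
      proof (cases "{u,v} \<in> E")
        case True
        have "m1 {u, v} * ((d {u, v})\<^sup>2 - (norm (\<phi> u - \<phi> v))\<^sup>2) = 0" using c1 that True by blast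
        then have "m1 {u, v} * (d {u, v})\<^sup>2 - m1 {u, v} * (norm (\<phi> u - \<phi> v))\<^sup>2 = 0"
          unfolding right_diff_distrib .
        moreover have "L.Aw u v = m1 {u,v}" unfolding L.Aw_def using True by simp
        ultimately show ?thesis by auto
      next
        case False then show ?thesis unfolding L.Aw_def by simp
      qed
      then have "(\<Sum>u\<in>V. \<Sum>v\<in>V. L.Aw u v * (norm (\<phi> u - \<phi> v))^2) = (\<Sum>u\<in>V. \<Sum>v\<in>V. L.Aw u v * (d {u,v})^2)"
        by (intro sum.cong) auto
      then show ?thesis unfolding SQ_def L.SQ D2A by simp
    qed
    moreover have "SQ \<phi> = lam * SN \<phi>"
    proof -
      have "L.Qf (\<lambda>w. \<phi> w $ i) = lam * L.Nq (\<lambda>w. \<phi> w $ i)" for i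
        using c2 by (intro eig_Q) (simp add: L.mbar_comp)
      then show ?thesis unfolding SQ_def SN_def by (simp add: sum_distrib_left)
    qed
    ultimately have lSN: "lam * SN \<phi> = D2" by simp
    have "nb \<phi> = B0"
    proof (cases "lam > 0")
      case True
      have "lam * (MM - MM * nb \<phi>) = D2" using lSN adm_SN[OF adm] by simp
      then have "lam * (MM * (1 - nb \<phi>)) = D2" by (simp add: algebra_simps)
      then have e: "MM * (1 - nb \<phi>) = D2 / lam" using True by (simp add: eq_divide_eq mult.commute)
      have "1 - nb \<phi> = (MM * (1 - nb \<phi>)) / MM" using Mpos by simp
      also have "\<dots> = D2 / lam / MM" unfolding e ..
      finally have "1 - nb \<phi> = D2 / lam / MM" .
      moreover have "D2 / MM / lam = D2 / lam / MM" by simp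
      ultimately show ?thesis unfolding B0_def by linarith
    next
      case False
      then have E0: "E = {}" and N0: "\<forall>f. L.Nq f = 0" using P3 by auto
      have "SN \<phi> = 0" unfolding SN_def using N0 by simp
      then have "nb \<phi> = 1" using adm_SN[OF adm] Mpos by simp
      moreover have "D2 = 0" unfolding D2_def E0 by simp
      ultimately show ?thesis unfolding B0_def by simp
    qed
    then have "delta TYPE('n) V E m0 d \<le> B0"
      unfolding delta_eq using adm Sdbdd unfolding Sd_def nb_def by (auto intro!: cInf_lower)
    then show ?thesis using part1 by simp
  qed
  have part3: "\<exists>\<phi> :: 'a \<Rightarrow> real ^ 'n. admissible V E m0 d \<phi>
              \<and> (\<forall>u\<in>V. \<forall>v\<in>V. {u, v} \<in> E \<longrightarrow>
                   m1 {u, v} * ((d {u, v})\<^sup>2 - (norm (\<phi> u - \<phi> v))\<^sup>2) = 0)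
              \<and> (\<forall>u\<in>V. \<forall>i. laplacian V E m0 m1 (\<lambda>w. \<phi> w $ i) u
                   = lambda1 V E m0 m1 * (\<phi> u $ i - bary V m0 \<phi> $ i))"
    if deq: "delta TYPE('n) V E m0 d = B0"
  proof -
    define K where "K = {\<phi> :: 'a \<Rightarrow> real ^ 'n. admissible V E m0 d \<phi>}"
    have Kne: "K \<noteq> {}" unfolding K_def using adm0 by blast
    have Kbd: "\<forall>\<phi>\<in>K. \<forall>u\<in>V. norm (\<phi> u) \<le> 1 + MM * (\<Sum>v\<in>V. 1 / m0 v)"
    proof (intro ballI)
      fix \<phi> u assume \<phi>: "\<phi> \<in> K" and u: "u \<in> V"
      have "m0 u * (norm (\<phi> u))^2 \<le> (\<Sum>v\<in>V. m0 v * (norm (\<phi> v))^2)"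
        using u fin m0_pos by (intro member_le_sum) auto
      then have "m0 u * (norm (\<phi> u))^2 \<le> MM" using \<phi> unfolding K_def admissible_def MM_def by simp
      then have "(norm (\<phi> u))^2 \<le> MM * (1 / m0 u)" using m0_pos u by (simp add: field_simps)
      also have "\<dots> \<le> MM * (\<Sum>v\<in>V. 1 / m0 v)"
        using u fin m0_pos Mpos by (intro mult_left_mono member_le_sum) (auto simp: less_imp_le)
      finally show "norm (\<phi> u) \<le> 1 + MM * (\<Sum>v\<in>V. 1 / m0 v)"
        using L.abs_le_1sq[of "norm (\<phi> u)"] by simp
    qed
    have Kcl: "\<psi> \<in> K \<and> (\<lambda>k. nb (\<phi>s k)) \<longlonglongrightarrow> nb \<psi>"
      if Ks: "\<forall>k. \<phi>s k \<in> K" and lims: "\<forall>u\<in>V. (\<lambda>k. \<phi>s k u) \<longlonglongrightarrow> \<psi> u" for \<phi>s \<psi>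
    proof -
      have l1: "(\<lambda>k. \<Sum>u\<in>V. m0 u * (norm (\<phi>s k u))^2) \<longlonglongrightarrow> (\<Sum>u\<in>V. m0 u * (norm (\<psi> u))^2)"
        using lims by (intro tendsto_intros) auto
      have "(\<lambda>k. \<Sum>u\<in>V. m0 u * (norm (\<phi>s k u))^2) = (\<lambda>k. total_mass V m0)"
        using Ks unfolding K_def admissible_def by auto
      then have "(\<lambda>k. \<Sum>u\<in>V. m0 u * (norm (\<phi>s k u))^2) \<longlonglongrightarrow> total_mass V m0" by simp
      then have e1: "(\<Sum>u\<in>V. m0 u * (norm (\<psi> u))^2) = total_mass V m0"
        using LIMSEQ_unique[OF l1] by auto
      have e2: "norm (\<psi> u - \<psi> v) \<le> d {u, v}" if uv: "u \<in> V" "v \<in> V" "{u,v} \<in> E" for u v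
      proof -
        have "(\<lambda>k. norm (\<phi>s k u - \<phi>s k v)) \<longlonglongrightarrow> norm (\<psi> u - \<psi> v)"
          using lims uv by (intro tendsto_intros) auto
        moreover have "\<forall>k. norm (\<phi>s k u - \<phi>s k v) \<le> d {u, v}"
          using Ks uv unfolding K_def admissible_def by auto
        ultimately show ?thesis by (intro LIMSEQ_le_const2) auto
      qed
      have "(\<lambda>k. nb (\<phi>s k)) \<longlonglongrightarrow> nb \<psi>"
        unfolding nb_def bary_def using lims by (intro tendsto_intros) auto
      then show ?thesis unfolding K_def admissible_def using e1 e2 by auto
    qed
    obtain \<phi> where \<phi>K: "\<phi> \<in> K" and \<phi>min: "\<forall>\<psi>\<in>K. nb \<phi> \<le> nb \<psi>"
    proof -
      have "\<forall>\<phi>\<in>K. 0 \<le> nb \<phi>" unfolding nb_def by simp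
      from attain_min[OF fin Kne Kbd Kcl this] show ?thesis using that by blast
    qed
    have adm: "admissible V E m0 d \<phi>" using \<phi>K unfolding K_def by simp
    have "Inf Sd = nb \<phi>"
      using adm \<phi>min unfolding Sd_def K_def nb_def by (intro cInf_eq_minimum) auto
    then have nbB: "nb \<phi> = B0" using deq delta_eq by simp
    have nnQ: "\<forall>i. 0 \<le> L.Qf (\<lambda>w. \<phi> w $ i) - lam * L.Nq (\<lambda>w. \<phi> w $ i)" using P1 by simp
    have nnA: "\<forall>u\<in>V. \<forall>v\<in>V. 0 \<le> L.Aw u v * (d {u,v})^2 - L.Aw u v * (norm (\<phi> u - \<phi> v))^2"
    proof (intro ballI)
      fix u v assume that: "u \<in> V" "v \<in> V"
      show "0 \<le> L.Aw u v * (d {u,v})^2 - L.Aw u v * (norm (\<phi> u - \<phi> v))^2"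
      proof (cases "{u,v} \<in> E")
        case True
        then have "norm (\<phi> u - \<phi> v) \<le> d {u,v}" using adm that unfolding admissible_def by blast
        then have "(norm (\<phi> u - \<phi> v))^2 \<le> (d {u,v})^2" by (simp add: power_mono)
        then show ?thesis using L.Aw_nn by (simp add: mult_left_mono)
      next
        case False then show ?thesis unfolding L.Aw_def by simp
      qed
    qed
    have tight: "(\<forall>i. L.Qf (\<lambda>w. \<phi> w $ i) = lam * L.Nq (\<lambda>w. \<phi> w $ i))
        \<and> (\<forall>u\<in>V. \<forall>v\<in>V. L.Aw u v * (d {u,v})^2 - L.Aw u v * (norm (\<phi> u - \<phi> v))^2 = 0)"
    proof (cases "lam > 0")
      case True
      have "D2 / MM / lam = D2 / lam / MM" by simp
      then have "1 - nb \<phi> = D2 / lam / MM" using nbB unfolding B0_def by linarith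
      then have "MM * (1 - nb \<phi>) = MM * (D2 / lam / MM)" by simp
      also have "\<dots> = D2 / lam" using Mpos by simp
      finally have "MM * (1 - nb \<phi>) = D2 / lam" .
      then have "lam * (MM * (1 - nb \<phi>)) = D2" using True by simp
      moreover have "SN \<phi> = MM * (1 - nb \<phi>)" using adm_SN[OF adm] by (simp add: algebra_simps)
      ultimately have lSN: "lam * SN \<phi> = D2" by simp
      have s1: "(\<Sum>i\<in>UNIV. L.Qf (\<lambda>w. \<phi> w $ i) - lam * L.Nq (\<lambda>w. \<phi> w $ i)) = SQ \<phi> - lam * SN \<phi>"
        unfolding SQ_def SN_def by (simp add: sum_subtractf sum_distrib_left)
      have s2: "(\<Sum>u\<in>V. \<Sum>v\<in>V. L.Aw u v * (d {u,v})^2 - L.Aw u v * (norm (\<phi> u - \<phi> v))^2) = 2 * D2 - 2 * SQ \<phi>"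
        unfolding SQ_def L.SQ D2A by (simp add: sum_subtractf)
      have sq: "SQ \<phi> \<le> D2" using adm_SQ[OF adm] .
      have sum1: "(\<Sum>i\<in>UNIV. L.Qf (\<lambda>w. \<phi> w $ i) - lam * L.Nq (\<lambda>w. \<phi> w $ i)) = 0"
      proof -
        have "0 \<le> (\<Sum>i\<in>UNIV. L.Qf (\<lambda>w. \<phi> w $ i) - lam * L.Nq (\<lambda>w. \<phi> w $ i))"
          using nnQ by (simp add: sum_nonneg)
        then show ?thesis using s1 lSN sq by simp
      qed
      have SQD: "SQ \<phi> = D2" using sum1 s1 lSN by simp
      have q: "\<forall>i. L.Qf (\<lambda>w. \<phi> w $ i) = lam * L.Nq (\<lambda>w. \<phi> w $ i)"
        using sum_nonneg_eq_0_iff[of UNIV "\<lambda>i. L.Qf (\<lambda>w. \<phi> w $ i) - lam * L.Nq (\<lambda>w. \<phi> w $ i)"] sum1 nnQ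
        by simp
      have s0: "(\<Sum>u\<in>V. \<Sum>v\<in>V. L.Aw u v * (d {u,v})^2 - L.Aw u v * (norm (\<phi> u - \<phi> v))^2) = 0"
        using s2 SQD by simp
      have h1: "\<forall>u\<in>V. (\<Sum>v\<in>V. L.Aw u v * (d {u,v})^2 - L.Aw u v * (norm (\<phi> u - \<phi> v))^2) = 0"
      proof -
        have "\<And>u. u \<in> V \<Longrightarrow> 0 \<le> (\<Sum>v\<in>V. L.Aw u v * (d {u,v})^2 - L.Aw u v * (norm (\<phi> u - \<phi> v))^2)"
          using nnA by (simp add: sum_nonneg)
        then have "(\<Sum>u\<in>V. \<Sum>v\<in>V. L.Aw u v * (d {u,v})^2 - L.Aw u v * (norm (\<phi> u - \<phi> v))^2) = 0
           \<longleftrightarrow> (\<forall>u\<in>V. (\<Sum>v\<in>V. L.Aw u v * (d {u,v})^2 - L.Aw u v * (norm (\<phi> u - \<phi> v))^2) = 0)"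
          by (intro sum_nonneg_eq_0_iff[OF fin])
        then show ?thesis using s0 by blast
      qed
      have "\<forall>u\<in>V. \<forall>v\<in>V. L.Aw u v * (d {u,v})^2 - L.Aw u v * (norm (\<phi> u - \<phi> v))^2 = 0"
      proof
        fix u assume u: "u \<in> V"
        then have "(\<Sum>v\<in>V. L.Aw u v * (d {u,v})^2 - L.Aw u v * (norm (\<phi> u - \<phi> v))^2) = 0" using h1 by blast
        moreover have "(\<Sum>v\<in>V. L.Aw u v * (d {u,v})^2 - L.Aw u v * (norm (\<phi> u - \<phi> v))^2) = 0
           \<longleftrightarrow> (\<forall>v\<in>V. L.Aw u v * (d {u,v})^2 - L.Aw u v * (norm (\<phi> u - \<phi> v))^2 = 0)"
          using nnA u by (intro sum_nonneg_eq_0_iff[OF fin]) auto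
        ultimately show "\<forall>v\<in>V. L.Aw u v * (d {u,v})^2 - L.Aw u v * (norm (\<phi> u - \<phi> v))^2 = 0"
          by blast
      qed
      then show ?thesis using q by simp
    next
      case False
      then have E0: "E = {}" and N0: "\<forall>f. L.Nq f = 0" using P3 by auto
      have A0: "\<And>u v. L.Aw u v = 0" unfolding L.Aw_def using E0 by simp
      have "\<And>f. L.Qf f = 0" unfolding L.Qf_alt A0 by simp
      then show ?thesis using N0 A0 by simp
    qed
    show ?thesis
    proof (intro exI conjI)
      show "admissible V E m0 d \<phi>" by (rule adm)
      show "\<forall>u\<in>V. \<forall>v\<in>V. {u, v} \<in> E \<longrightarrow> m1 {u, v} * ((d {u, v})\<^sup>2 - (norm (\<phi> u - \<phi> v))\<^sup>2) = 0"
      proof (intro ballI impI)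
        fix u v assume uv: "u \<in> V" "v \<in> V" "{u, v} \<in> E"
        have f: "L.Aw u v * (d {u,v})^2 - L.Aw u v * (norm (\<phi> u - \<phi> v))^2 = 0"
          using tight uv by blast
        have aw: "L.Aw u v = m1 {u,v}" unfolding L.Aw_def using uv by simp
        show "m1 {u, v} * ((d {u, v})\<^sup>2 - (norm (\<phi> u - \<phi> v))\<^sup>2) = 0"
          unfolding right_diff_distrib using f[unfolded aw] .
      qed
      show "\<forall>u\<in>V. \<forall>i. laplacian V E m0 m1 (\<lambda>w. \<phi> w $ i) u = lambda1 V E m0 m1 * (\<phi> u $ i - bary V m0 \<phi> $ i)"
      proof (intro ballI allI)
        fix u i assume u: "u \<in> V"
        have "L.Qf (\<lambda>w. \<phi> w $ i) = lam * L.Nq (\<lambda>w. \<phi> w $ i)" using tight by blast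
        then have "\<forall>u\<in>V. laplacian V E m0 m1 (\<lambda>w. \<phi> w $ i) u = lam * (\<phi> u $ i - L.mbar (\<lambda>w. \<phi> w $ i))"
          using P2 by blast
        then have "laplacian V E m0 m1 (\<lambda>w. \<phi> w $ i) u = lam * (\<phi> u $ i - L.mbar (\<lambda>w. \<phi> w $ i))"
          using u by blast
        then show "laplacian V E m0 m1 (\<lambda>w. \<phi> w $ i) u = lambda1 V E m0 m1 * (\<phi> u $ i - bary V m0 \<phi> $ i)"
          unfolding L.mbar_comp lam_def .
      qed
    qed
  qed
  have B0eq: "B0 = 1 - ((\<Sum>e\<in>E. (d e)\<^sup>2) / total_mass V m0) / lambda1 V E m0 m1"
    unfolding B0_def D2_def MM_def lam_def ..
  show ?thesis unfolding B0eq[symmetric]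
  proof (intro conjI iffI)
    show "B0 \<le> delta TYPE('n) V E m0 d" by (rule part1)
  next
    assume "delta TYPE('n) V E m0 d = B0"
    then show "\<exists>\<phi> :: 'a \<Rightarrow> real ^ 'n. admissible V E m0 d \<phi>
              \<and> (\<forall>u\<in>V. \<forall>v\<in>V. {u, v} \<in> E \<longrightarrow>
                   m1 {u, v} * ((d {u, v})\<^sup>2 - (norm (\<phi> u - \<phi> v))\<^sup>2) = 0)
              \<and> (\<forall>u\<in>V. \<forall>i. laplacian V E m0 m1 (\<lambda>w. \<phi> w $ i) u
                   = lambda1 V E m0 m1 * (\<phi> u $ i - bary V m0 \<phi> $ i))" by (rule part3)
  next
    assume "\<exists>\<phi> :: 'a \<Rightarrow> real ^ 'n. admissible V E m0 d \<phi>
              \<and> (\<forall>u\<in>V. \<forall>v\<in>V. {u, v} \<in> E \<longrightarrow>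
                   m1 {u, v} * ((d {u, v})\<^sup>2 - (norm (\<phi> u - \<phi> v))\<^sup>2) = 0)
              \<and> (\<forall>u\<in>V. \<forall>i. laplacian V E m0 m1 (\<lambda>w. \<phi> w $ i) u
                   = lambda1 V E m0 m1 * (\<phi> u $ i - bary V m0 \<phi> $ i))"
    then show "delta TYPE('n) V E m0 d = B0" by (rule part2)
  qed
qed

end
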